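(* Let $\mathsf{F}$ be a fixed plane forest with $m\ge 0$ vertices. Choose a plane tree with $k$ vertices uniformly at random. Let $\rho_k(\mathsf{F})$ be the number of non-root vertices $v$ with $F(v)$ isomorphic to $\mathsf{F}$, divided by $k$. Then $\rho_k(\mathsf{F})$ is concentrated (as $k\to\infty$) at $$\mu_\rho(\mathsf{F})=\frac{1}{2^{2m+1}}.$$
   Context: A plane tree is a rooted tree in which the children of each vertex are linearly ordered (left to right). A plane forest is a finite (possibly empty) sequence of plane trees; isomorphism of plane forests preserves the order of components and of children. For a non-root vertex $v$ of a plane tree, $F(v)$ denotes the plane forest whose components are the subtrees rooted at those siblings of $v$ that precede $v$ in the left-to-right order of the children of the parent of $v$, listed in that order. A sequence of random variables $(\xi_k)$ is concentrated at a constant $\mu$ if for every $\varepsilon>0$ there is $K$ such that $\mathbb{P}[|\xi_k-\mu|\le\varepsilon]>1-\varepsilon$ for all $k\ge K$. *)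

theory Defs
  imports Complex_Main
begin

text \<open>Two plane trees are isomorphic iff they are equal as values of this datatype.
A plane forest is a list of plane trees (isomorphism = equality of lists).\<close>

datatype ptree = Node "ptree list"

type_synonym pforest = "ptree list"

fun children :: "ptree \<Rightarrow> ptree list" where
  "children (Node cs) = cs"

fun nverts :: "ptree \<Rightarrow> nat" where
  "nverts (Node cs) = Suc (sum_list (map nverts cs))"

definition forest_verts :: "pforest \<Rightarrow> nat" where
  "forest_verts F = sum_list (map nverts F)"

text \<open>Number of non-root vertices v of a tree with F(v) isomorphic to the forest F:
every non-root vertex is the i-th child (0-based) of some vertex u, and F(v) is the
forest of the subtrees of the first i children of u.\<close>
fun count_prefix :: "pforest \<Rightarrow> ptree \<Rightarrow> nat" where
  "count_prefix F (Node cs) =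
     length (filter (\<lambda>i. take i cs = F) [0..<length cs]) + sum_list (map (count_prefix F) cs)"

definition trees_of_size :: "nat \<Rightarrow> ptree set" where
  "trees_of_size k = {t. nverts t = k}"

definition uniform_prob :: "'a set \<Rightarrow> ('a \<Rightarrow> bool) \<Rightarrow> real" where
  "uniform_prob A P = real (card {x \<in> A. P x}) / real (card A)"

definition concentrated :: "(nat \<Rightarrow> 'a set) \<Rightarrow> (nat \<Rightarrow> 'a \<Rightarrow> real) \<Rightarrow> real \<Rightarrow> bool" where
  "concentrated \<Omega> X \<mu> \<longleftrightarrow>
     (\<forall>\<epsilon>>0. \<exists>K. \<forall>k\<ge>K. uniform_prob (\<Omega> k) (\<lambda>t. \<bar>X k t - \<mu>\<bar> \<le> \<epsilon>) > 1 - \<epsilon>)"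

definition rho :: "pforest \<Rightarrow> nat \<Rightarrow> ptree \<Rightarrow> real" where
  "rho F k t = real (count_prefix F t) / real k"

end

theory Submission
  imports Defs "HOL-Real_Asymp.Real_Asymp"
begin


fun code :: "ptree \<Rightarrow> bool list" where
  "code (Node cs) = concat (map (\<lambda>c. True # code c @ [False]) cs)"

definition fcode :: "ptree list \<Rightarrow> bool list" where
  "fcode cs = concat (map (\<lambda>c. True # code c @ [False]) cs)"

lemma code_fcode: "code (Node cs) = fcode cs" by (simp add: fcode_def)
lemma fcode_Nil[simp]: "fcode [] = []" by (simp add: fcode_def)
lemma fcode_Cons[simp]: "fcode (c # cs) = True # code c @ False # fcode cs" by (simp add: fcode_def)
lemma fcode_append[simp]: "fcode (xs @ ys) = fcode xs @ fcode ys" by (simp add: fcode_def)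
declare code.simps[simp del]

definition hgt :: "bool list \<Rightarrow> int" where
  "hgt w = 2 * int (length (filter id w)) - int (length w)"

lemma hgt_Nil[simp]: "hgt [] = 0" by (simp add: hgt_def)
lemma hgt_append[simp]: "hgt (a @ b) = hgt a + hgt b" by (simp add: hgt_def)
lemma hgt_Cons[simp]: "hgt (x # a) = (if x then 1 else -1) + hgt a" by (simp add: hgt_def)

definition bal :: "bool list \<Rightarrow> bool" where
  "bal w \<longleftrightarrow> (\<forall>i. 0 \<le> hgt (take i w)) \<and> hgt w = 0"

lemma bal_Nil[simp]: "bal []" by (simp add: bal_def)

lemma bal_append: "bal a \<Longrightarrow> bal b \<Longrightarrow> bal (a @ b)"
  unfolding bal_def by (simp add: take_append add_nonneg_nonneg)

lemma bal_wrap: assumes "bal a" shows "bal (True # a @ [False])"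
  unfolding bal_def
proof (intro conjI allI)
  fix i show "0 \<le> hgt (take i (True # a @ [False]))"
  proof (cases i)
    case (Suc j)
    have "0 \<le> hgt (take j a)" using assms by (simp add: bal_def)
    moreover have "hgt (take (j - length a) [False]) \<ge> -1"
      by (cases "j - length a") auto
    ultimately show ?thesis using Suc by (simp add: take_append)
  qed simp
qed (use assms in \<open>simp add: bal_def\<close>)

lemma bal_fcode_aux: "(\<forall>c\<in>set cs. bal (code c)) \<Longrightarrow> bal (fcode cs)"
proof (induction cs)
  case (Cons c cs)
  have "bal ((True # code c @ [False]) @ fcode cs)" using Cons by (intro bal_append bal_wrap) auto
  thus ?case by simp
qed simp

lemma bal_code: "bal (code t)"
proof (induction t)
  case (Node cs)
  thus ?case by (simp add: code_fcode bal_fcode_aux)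
qed

lemma bal_fcode: "bal (fcode cs)"
  by (simp add: bal_code bal_fcode_aux)

lemma bal_neg: assumes "bal u" shows "hgt (take (Suc (length u)) (u @ False # v)) = -1"
  using assms by (simp add: bal_def take_append)

lemma bal_parse:
  assumes "bal u" "bal u'" "u @ False # v = u' @ False # v'"
  shows "u = u'"
proof -
  have *: "False" if "bal u" "bal u'" "u @ False # v = u' @ False # v'" "length u < length u'"
    for u u' v v'
  proof -
    have h1: "hgt (take (Suc (length u)) (u @ False # v)) = -1" using bal_neg that(1) .
    have "take (Suc (length u)) (u @ False # v) = take (Suc (length u)) (u' @ False # v')"
      using that(3) by simp
    also have "\<dots> = take (Suc (length u)) u'" using that(4) by (simp add: take_append)
    finally have "hgt (take (Suc (length u)) u') = -1" using h1 by simp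
    moreover have "0 \<le> hgt (take (Suc (length u)) u')" using that(2) unfolding bal_def by blast
    ultimately show False by simp
  qed
  have "length u = length u'"
    using *[OF assms] *[OF assms(2,1) assms(3)[symmetric]] by (meson linorder_neqE_nat)
  thus ?thesis using assms(3) by (metis append_eq_append_conv)
qed

lemma code_inj: "code t = code t' \<Longrightarrow> t = t'"
proof (induction t arbitrary: t')
  case (Node cs)
  obtain cs' where t': "t' = Node cs'" by (cases t')
  have "fcode cs = fcode cs' \<Longrightarrow> cs = cs'" using Node.IH
  proof (induction cs arbitrary: cs')
    case Nil thus ?case by (cases cs') auto
  next
    case (Cons c cs)
    then obtain c' cs'' where cs': "cs' = c' # cs''" by (cases cs') auto
    have "code c = code c'"
      using Cons.prems(1) bal_parse[OF bal_code bal_code] by (simp add: cs')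
    hence "c = c'" using Cons.prems(2) by auto
    moreover have "fcode cs = fcode cs''" using Cons.prems(1) \<open>code c = code c'\<close> by (simp add: cs')
    ultimately show ?case using Cons by (auto simp: cs')
  qed
  thus ?case using Node.prems t' by (simp add: code_fcode)
qed

lemma length_code: "length (code t) + 2 = 2 * nverts t"
proof (induction t)
  case (Node cs)
  have "length (fcode cs) = 2 * sum_list (map nverts cs)" using Node
    by (induction cs) auto
  thus ?case by (simp add: code_fcode)
qed

lemma length_fcode: "length (fcode cs) = 2 * sum_list (map nverts cs)"
proof (induction cs)
  case (Cons c cs) thus ?case using length_code[of c] by simp
qed simp

lemma count_fcode: "2 * length (filter id (fcode cs)) = length (fcode cs)"
  using bal_fcode[of cs] unfolding bal_def hgt_def by linarith



lemma hgt_take_ge: "bal (True # w') \<Longrightarrow> -1 \<le> hgt (take i w')"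
proof -
  assume "bal (True # w')"
  hence "0 \<le> hgt (take (Suc i) (True # w'))" unfolding bal_def by blast
  thus ?thesis by simp
qed

lemma bal_decomp:
  assumes "bal w" "w \<noteq> []"
  shows "\<exists>u v. w = True # u @ False # v \<and> bal u \<and> bal v"
proof -
  obtain a w' where w: "w = a # w'" using assms(2) by (cases w) auto
  have "0 \<le> hgt (take 1 w)" using assms(1) unfolding bal_def by blast
  hence a: "a" using w by (cases a) auto
  have bw: "bal (True # w')" using assms(1) w a by simp
  have hw': "hgt w' = -1" using bw by (simp add: bal_def)
  define i0 where "i0 = (LEAST i. hgt (take i w') = -1)"
  have ex: "hgt (take (length w') w') = -1" using hw' by simp
  have i0: "hgt (take i0 w') = -1" unfolding i0_def by (rule LeastI, rule ex)
  have i0le: "i0 \<le> length w'" unfolding i0_def by (rule Least_le, rule ex)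
  have lt: "0 \<le> hgt (take i w')" if "i < i0" for i
  proof -
    have "hgt (take i w') \<noteq> -1" using not_less_Least[OF that[unfolded i0_def]] by blast
    with hgt_take_ge[OF bw, of i] show ?thesis by linarith
  qed
  have "i0 \<noteq> 0" proof assume "i0 = 0" thus False using i0 by simp qed
  then obtain j where j: "i0 = Suc j" by (cases i0) auto
  have jl: "j < length w'" using i0le j by simp
  have tk: "take i0 w' = take j w' @ [w' ! j]" using j jl by (simp add: take_Suc_conv_app_nth)
  have hj: "0 \<le> hgt (take j w')" using lt j by simp
  have wj: "w' ! j = False" using i0 hj unfolding tk by (cases "w' ! j") auto
  define u where "u = take j w'"
  define v where "v = drop i0 w'"
  have w'eq: "w' = u @ False # v"
  proof -
    have "w' = take i0 w' @ drop i0 w'" by simp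
    also have "\<dots> = (take j w' @ [False]) @ drop i0 w'" using tk wj by simp
    finally show ?thesis by (simp add: u_def v_def)
  qed
  have hu: "hgt u = 0" using i0 tk wj unfolding u_def by simp
  have "bal u" unfolding bal_def
  proof (intro conjI allI hu)
    fix i
    have "take i u = take (min i j) w'" unfolding u_def by (simp add: min.commute)
    moreover have "min i j < i0" using j by simp
    ultimately show "0 \<le> hgt (take i u)" using lt by simp
  qed
  moreover have "bal v" unfolding bal_def
  proof (intro conjI allI)
    fix i
    have "take (i0 + i) w' = take i0 w' @ take i v" unfolding v_def by (simp add: take_add)
    hence "hgt (take (i0 + i) w') = -1 + hgt (take i v)" using i0 by simp
    thus "0 \<le> hgt (take i v)" using hgt_take_ge[OF bw, of "i0+i"] by linarith
    have "w' = take i0 w' @ v" unfolding v_def by simp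
    hence "hgt w' = hgt (take i0 w') + hgt v" by (metis hgt_append)
    thus "hgt v = 0" using i0 hw' by simp
  qed
  ultimately show ?thesis using w a w'eq by blast
qed

lemma bal_decode: "bal w \<Longrightarrow> \<exists>cs. fcode cs = w"
proof (induction "length w" arbitrary: w rule: less_induct)
  case less
  show ?case
  proof (cases "w = []")
    case True thus ?thesis by (intro exI[of _ "[]"]) simp
  next
    case False
    then obtain u v where uv: "w = True # u @ False # v" "bal u" "bal v"
      using bal_decomp less.prems by blast
    obtain cs1 where "fcode cs1 = u" using less.hyps[of u] uv by auto
    moreover obtain cs2 where "fcode cs2 = v" using less.hyps[of v] uv by auto
    ultimately have "fcode (Node cs1 # cs2) = w" using uv by (simp add: code_fcode)
    thus ?thesis by blast
  qed
qed



definition pat :: "pforest \<Rightarrow> bool list" where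
  "pat F = True # fcode F @ [True]"

definition occR :: "bool list \<Rightarrow> bool list \<Rightarrow> bool list \<Rightarrow> nat" where
  "occR P w s = (\<Sum>j<length w. if take (length P) (drop j (w @ s)) = P then 1 else 0)"

lemma occR_Nil[simp]: "occR P [] s = 0" by (simp add: occR_def)

lemma sum_split_shift: "(\<Sum>j<m+n. f j) = (\<Sum>j<m. f j) + (\<Sum>j<n. f (m + j))"
  for f :: "nat \<Rightarrow> 'a::comm_monoid_add"
  by (induction n) (simp_all add: add.assoc)

lemma occR_append: "occR P (a @ b) s = occR P a (b @ s) + occR P b s"
proof -
  let ?f = "\<lambda>j. if take (length P) (drop j (a @ b @ s)) = P then 1 else (0::nat)"
  have "occR P (a @ b) s = (\<Sum>j<length a + length b. ?f j)" by (simp add: occR_def)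
  also have "\<dots> = (\<Sum>j<length a. ?f j) + (\<Sum>j<length b. ?f (length a + j))"
    by (rule sum_split_shift)
  also have "(\<Sum>j<length b. ?f (length a + j)) = occR P b s"
    unfolding occR_def by (intro sum.cong) (simp_all add: drop_append)
  finally show ?thesis by (simp add: occR_def)
qed

lemma occR_Cons: "occR P (x # w) s = (if take (length P) (x # w @ s) = P then 1 else 0) + occR P w s"
  using occR_append[of P "[x]" w s] by (simp add: occR_def)

lemma take_parse:
  assumes "bal u" "bal u'" "take n (u @ False # v) = u' @ False # v'"
  shows "u = u'"
proof -
  have "u @ False # v = take n (u @ False # v) @ drop n (u @ False # v)" by (rule append_take_drop_id[symmetric])
  also have "\<dots> = u' @ False # (v' @ drop n (u @ False # v))" using assms(3) by simp
  finally show ?thesis using bal_parse[OF assms(1,2)] by blast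
qed

lemma prefix_fcode:
  "take (Suc (length (fcode F))) (fcode cs @ False # rest) = fcode F @ [True] \<longleftrightarrow> (\<exists>x r. cs = F @ x # r)"
proof
  assume "\<exists>x r. cs = F @ x # r"
  then obtain x r where "cs = F @ x # r" by blast
  thus "take (Suc (length (fcode F))) (fcode cs @ False # rest) = fcode F @ [True]" by simp
next
  assume "take (Suc (length (fcode F))) (fcode cs @ False # rest) = fcode F @ [True]"
  thus "\<exists>x r. cs = F @ x # r"
  proof (induction F arbitrary: cs)
    case Nil
    thus ?case by (cases cs) auto
  next
    case (Cons f F)
    then obtain c cs' where cs: "cs = c # cs'" by (cases cs) auto
    let ?Z = "fcode cs' @ False # rest"
    have tk: "take (Suc (length (code f)) + Suc (length (fcode F))) (code c @ False # ?Z)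
        = code f @ False # (fcode F @ [True])"
      using Cons.prems unfolding cs by simp
    have "code c = code f"
      by (rule take_parse[OF bal_code bal_code tk])
    hence "c = f" by (rule code_inj)
    have "take (Suc (length (fcode F))) ?Z = fcode F @ [True]"
      using tk \<open>code c = code f\<close> by simp
    from Cons.IH[OF this] obtain x r where "cs' = F @ x # r" by blast
    thus ?case using cs \<open>c = f\<close> by simp
  qed
qed

lemma cntF: "length (filter (\<lambda>i. take i cs = F) [0..<length cs]) = (if \<exists>x r. cs = F @ x # r then 1 else 0)"
proof -
  have "length (filter (\<lambda>i. take i cs = F) [0..<length cs]) = card {i. i < length cs \<and> take i cs = F}"
    by (simp add: length_filter_conv_card cong: conj_cong)
  also have "{i. i < length cs \<and> take i cs = F} = (if \<exists>x r. cs = F @ x # r then {length F} else {})"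
  proof (cases "\<exists>x r. cs = F @ x # r")
    case True
    then obtain x r where cs: "cs = F @ x # r" by blast
    have "{i. i < length cs \<and> take i cs = F} = {length F}"
    proof (intro equalityI subsetI)
      fix i assume "i \<in> {i. i < length cs \<and> take i cs = F}"
      hence "i < length cs" "take i cs = F" by auto
      hence "length F = i" by auto
      thus "i \<in> {length F}" by simp
    qed (auto simp: cs)
    thus ?thesis using True by simp
  next
    case False
    have "{i. i < length cs \<and> take i cs = F} = {}"
    proof (intro equalityI subsetI)
      fix i assume "i \<in> {i. i < length cs \<and> take i cs = F}"
      hence i: "i < length cs" "take i cs = F" by auto
      hence "cs = F @ cs ! i # drop (Suc i) cs"
        by (metis Cons_nth_drop_Suc append_take_drop_id)
      thus "i \<in> {}" using False by blast
    qed auto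
    thus ?thesis using False by simp
  qed
  finally show ?thesis by simp
qed

lemma count_prefix_Node:
  "count_prefix F (Node cs) = (if \<exists>x r. cs = F @ x # r then 1 else 0) + sum_list (map (count_prefix F) cs)"
  by (simp only: count_prefix.simps cntF)

declare count_prefix.simps[simp del]

lemma occR_code: "occR (pat F) (code t) s = sum_list (map (count_prefix F) (children t))"
proof (induction t arbitrary: s)
  case (Node cs)
  have "occR (pat F) (fcode cs) s = sum_list (map (count_prefix F) cs)"
    if "\<forall>c\<in>set cs. \<forall>s. occR (pat F) (code c) s = sum_list (map (count_prefix F) (children c))" for s
    using that
  proof (induction cs arbitrary: s)
    case Nil thus ?case by simp
  next
    case (Cons c cs)
    obtain cs' where c: "c = Node cs'" by (cases c)
    have "fcode (c # cs) = [True] @ code c @ [False] @ fcode cs" by simp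
    hence "occR (pat F) (fcode (c # cs)) s = occR (pat F) [True] (code c @ [False] @ fcode cs @ s)
       + (occR (pat F) (code c) ([False] @ fcode cs @ s) + (occR (pat F) [False] (fcode cs @ s)
       + occR (pat F) (fcode cs) s))"
      by (simp only: occR_append append.assoc)
    also have "occR (pat F) [False] (fcode cs @ s) = 0"
      by (simp add: occR_def pat_def)
    also have "occR (pat F) (fcode cs) s = sum_list (map (count_prefix F) cs)"
      using Cons by simp
    also have "occR (pat F) (code c) ([False] @ fcode cs @ s) = sum_list (map (count_prefix F) cs')"
      using Cons.prems c by simp
    also have "occR (pat F) [True] (code c @ [False] @ fcode cs @ s) = (if \<exists>x r. cs' = F @ x # r then 1 else 0)"
    proof -
      have "occR (pat F) [True] (code c @ [False] @ fcode cs @ s) =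
         (if take (Suc (length (fcode F))) (fcode cs' @ False # fcode cs @ s) = fcode F @ [True] then 1 else 0)"
        by (simp add: occR_def pat_def c code_fcode)
      thus ?thesis by (simp only: prefix_fcode)
    qed
    finally show ?case using c by (simp add: count_prefix_Node)
  qed
  thus ?case using Node by (simp add: code_fcode)
qed

lemma count_prefix_occR:
  "count_prefix F t = (if \<exists>x r. children t = F @ x # r then 1 else 0) + occR (pat F) (code t) s"
  by (cases t) (simp add: count_prefix_Node occR_code)



definition DF :: "nat \<Rightarrow> bool list \<Rightarrow> bool" where
  "DF N x \<longleftrightarrow> length x = N \<and> (\<forall>i<N. 0 \<le> hgt (take i x)) \<and> hgt x = -1"

lemma hgt_rotate[simp]: "hgt (rotate r w) = hgt w"
proof -
  have "hgt w = hgt (take (r mod length w) w) + hgt (drop (r mod length w) w)"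
    by (metis append_take_drop_id hgt_append)
  thus ?thesis by (simp add: rotate_drop_take)
qed

lemma length_filter_rotate[simp]: "length (filter id (rotate r w)) = length (filter id w)"
  using hgt_rotate[of r w] by (simp add: hgt_def)

lemma rot_hgt1:
  assumes "r < length w" "i \<le> length w - r"
  shows "hgt (take i (rotate r w)) = hgt (take (r + i) w) - hgt (take r w)"
proof -
  have "rotate r w = drop r w @ take r w" using assms by (simp add: rotate_drop_take)
  hence "take i (rotate r w) = take i (drop r w)" using assms by simp
  moreover have "take (r + i) w = take r w @ take i (drop r w)" by (simp add: take_add)
  ultimately show ?thesis by simp
qed

lemma rot_hgt2:
  assumes "r < length w" "length w - r \<le> i" "i \<le> length w"
  shows "hgt (take i (rotate r w)) = hgt w - hgt (take r w) + hgt (take (i + r - length w) w)"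
proof -
  have "rotate r w = drop r w @ take r w" using assms by (simp add: rotate_drop_take)
  moreover have "i + r - length w \<le> r" using assms by simp
  ultimately have "take i (rotate r w) = drop r w @ take (i + r - length w) w" using assms
    by (simp add: min_def)
  moreover have "hgt w = hgt (take r w) + hgt (drop r w)"
    by (metis append_take_drop_id hgt_append)
  ultimately show ?thesis by simp
qed

lemma DF_rot_iff:
  assumes r: "r < length w" and hw: "hgt w = -1"
  shows "DF (length w) (rotate r w) \<longleftrightarrow>
    (\<forall>j<length w. hgt (take r w) \<le> hgt (take j w)) \<and> (\<forall>j<r. hgt (take r w) < hgt (take j w))"
  (is "?L \<longleftrightarrow> ?R")
proof
  let ?N = "length w" let ?h = "\<lambda>j. hgt (take j w)"
  assume L: ?L
  hence pos: "\<And>i. i < ?N \<Longrightarrow> 0 \<le> hgt (take i (rotate r w))" by (simp add: DF_def)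
  have A: "?h r \<le> ?h j" if "j < ?N" "r \<le> j" for j
    using pos[of "j - r"] rot_hgt1[OF r, of "j - r"] that by simp
  have B: "?h r < ?h j" if "j < r" for j
  proof (cases "j = 0")
    case True
    have "?N - r < ?N" using that r by simp
    hence "0 \<le> hgt (take (?N - r) (rotate r w))" using pos by blast
    moreover have "hgt (take (?N - r) (rotate r w)) = ?h ?N - ?h r"
      using rot_hgt1[OF r, of "?N - r"] r by simp
    ultimately show ?thesis using hw True by simp
  next
    case False
    have "0 \<le> hgt (take (?N - r + j) (rotate r w))" using pos[of "?N - r + j"] that r by simp
    moreover have "hgt (take (?N - r + j) (rotate r w)) = hgt w - ?h r + ?h j"
      using rot_hgt2[OF r, of "?N - r + j"] r that by simp
    ultimately show ?thesis using hw by simp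
  qed
  show ?R using A B by (meson less_imp_le not_le)
next
  let ?N = "length w" let ?h = "\<lambda>j. hgt (take j w)"
  assume R: ?R
  have "0 \<le> hgt (take i (rotate r w))" if i: "i < ?N" for i
  proof (cases "i \<le> ?N - r")
    case True
    show ?thesis
    proof (cases "r + i < ?N")
      case True
      thus ?thesis using rot_hgt1[OF r, of i] \<open>i \<le> ?N - r\<close> R by simp
    next
      case False
      hence ri: "r + i = ?N" using \<open>i \<le> ?N - r\<close> r by simp
      hence "0 < r" using i by simp
      hence "?h r < ?h 0" using R by blast
      thus ?thesis using rot_hgt1[OF r, of i] \<open>i \<le> ?N - r\<close> ri hw by simp
    qed
  next
    case False
    hence j: "i + r - ?N < r" using i by simp
    hence "0 < r" by simp
    hence "?h r < ?h 0" using R by blast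
    hence "?h r \<le> -1" by simp
    thus ?thesis using rot_hgt2[OF r, of i] False i R j hw by fastforce
  qed
  thus ?L using hw by (simp add: DF_def del: hgt_rotate) simp
qed

lemma cycle_unique:
  assumes hw: "hgt w = -1"
  shows "\<exists>!r. r < length w \<and> DF (length w) (rotate r w)"
proof -
  let ?N = "length w" let ?h = "\<lambda>j. hgt (take j w)"
  have N: "0 < ?N" using hw by (cases w) auto
  define M where "M = Min (?h ` {..<?N})"
  have fin: "finite (?h ` {..<?N})" by simp
  have ne: "?h ` {..<?N} \<noteq> {}" using N by auto
  have "M \<in> ?h ` {..<?N}" unfolding M_def using Min_in[OF fin ne] .
  then obtain r0 where r0: "r0 < ?N" "?h r0 = M" by auto
  define r where "r = (LEAST r. r < ?N \<and> ?h r = M)"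
  have r: "r < ?N \<and> ?h r = M" unfolding r_def by (rule LeastI[of _ r0]) (use r0 in auto)
  have Mle: "M \<le> ?h j" if "j < ?N" for j unfolding M_def using Min_le[OF fin] that by auto
  have R: "(\<forall>j<?N. ?h r \<le> ?h j) \<and> (\<forall>j<r. ?h r < ?h j)"
  proof (intro conjI allI impI)
    fix j assume "j < ?N" thus "?h r \<le> ?h j" using r Mle by simp
  next
    fix j assume j: "j < r"
    hence jN: "j < ?N" using r by simp
    have "\<not> (j < ?N \<and> ?h j = M)" using not_less_Least[OF j[unfolded r_def]] by blast
    thus "?h r < ?h j" using Mle[OF jN] r jN by auto
  qed
  show ?thesis
  proof (rule ex1I[of _ r])
    show "r < ?N \<and> DF ?N (rotate r w)" using r R DF_rot_iff[OF _ hw] by blast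
  next
    fix r' assume r': "r' < ?N \<and> DF ?N (rotate r' w)"
    hence R': "(\<forall>j<?N. ?h r' \<le> ?h j) \<and> (\<forall>j<r'. ?h r' < ?h j)" using DF_rot_iff[OF _ hw] by blast
    show "r' = r"
    proof (rule ccontr)
      assume "r' \<noteq> r"
      hence "r' < r \<or> r < r'" by auto
      thus False using R R' r r' by (meson not_le)
    qed
  qed
qed

definition Wset :: "nat \<Rightarrow> bool list set" where
  "Wset N = {w. length w = N \<and> hgt w = -1}"

definition DFset :: "nat \<Rightarrow> bool list set" where
  "DFset N = {x. DF N x}"

lemma finite_Wset: "finite (Wset N)"
proof (rule finite_subset[OF _ finite_lists_length_eq[of "UNIV::bool set" N]])
  show "Wset N \<subseteq> {xs. set xs \<subseteq> UNIV \<and> length xs = N}" unfolding Wset_def by blast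
qed simp

lemma DFset_sub: "DFset N \<subseteq> Wset N" by (auto simp: DFset_def Wset_def DF_def)

lemma finite_DFset: "finite (DFset N)" using finite_subset[OF DFset_sub finite_Wset] .

lemma sum_one_unique:
  fixes N :: nat
  assumes "\<exists>!r. r < N \<and> P r"
  shows "(\<Sum>r<N. if P r then c else 0) = (c::real)"
proof -
  from assms obtain r0 where r0: "r0 < N" "P r0" "\<And>r. r < N \<Longrightarrow> P r \<Longrightarrow> r = r0" by blast
  have "(\<Sum>r<N. if P r then c else 0) = (\<Sum>r<N. if r = r0 then c else 0)"
  proof (rule sum.cong[OF refl])
    fix x assume "x \<in> {..<N}"
    hence "P x \<longleftrightarrow> x = r0" using r0 by blast
    thus "(if P x then c else 0) = (if x = r0 then c else 0)" by simp
  qed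
  also have "\<dots> = c" using r0(1) by (subst sum.delta) auto
  finally show ?thesis .
qed

lemma sum_transfer:
  fixes g :: "bool list \<Rightarrow> real"
  assumes inv: "\<And>w r. length w = N \<Longrightarrow> g (rotate r w) = g w"
  shows "(\<Sum>w\<in>Wset N. g w) = real N * (\<Sum>x\<in>DFset N. g x)"
proof -
  have "(\<Sum>w\<in>Wset N. g w) = (\<Sum>w\<in>Wset N. \<Sum>r<N. if DF N (rotate r w) then g w else 0)"
  proof (intro sum.cong refl)
    fix w assume w: "w \<in> Wset N"
    hence "\<exists>!r. r < N \<and> DF N (rotate r w)" using cycle_unique[of w] by (auto simp: Wset_def)
    thus "g w = (\<Sum>r<N. if DF N (rotate r w) then g w else 0)" by (simp add: sum_one_unique)
  qed
  also have "\<dots> = (\<Sum>r<N. \<Sum>w\<in>Wset N. if DF N (rotate r w) then g w else 0)"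
    by (rule sum.swap)
  also have "\<dots> = (\<Sum>r<N. \<Sum>x\<in>DFset N. g x)"
  proof (rule sum.cong[OF refl])
    fix r assume r: "r \<in> {..<N}"
    have "(\<Sum>w\<in>Wset N. if DF N (rotate r w) then g w else 0) = (\<Sum>w\<in>Wset N \<inter> {w. DF N (rotate r w)}. g w)"
      by (simp add: sum.inter_restrict finite_Wset)
    also have "\<dots> = (\<Sum>x\<in>DFset N. g x)"
    proof (rule sum.reindex_bij_witness[of _ "rotate (N - r)" "rotate r"])
      fix a assume a: "a \<in> Wset N \<inter> {w. DF N (rotate r w)}"
      hence la: "length a = N" by (simp add: Wset_def)
      show "rotate (N - r) (rotate r a) = a" using r la by (simp add: rotate_rotate)
      show "rotate r a \<in> DFset N" using a by (simp add: DFset_def)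
      show "g (rotate r a) = g a" using inv la by simp
    next
      fix b assume b: "b \<in> DFset N"
      hence lb: "length b = N" "hgt b = -1" by (simp_all add: DFset_def DF_def)
      show "rotate r (rotate (N - r) b) = b" using r lb by (simp add: rotate_rotate)
      show "rotate (N - r) b \<in> Wset N \<inter> {w. DF N (rotate r w)}"
        using r lb b by (simp add: Wset_def DFset_def rotate_rotate)
    qed
    finally show "(\<Sum>w\<in>Wset N. if DF N (rotate r w) then g w else 0) = (\<Sum>x\<in>DFset N. g x)" .
  qed
  also have "\<dots> = real N * (\<Sum>x\<in>DFset N. g x)" by simp
  finally show ?thesis .
qed

lemma code_DF: "nverts t = k \<Longrightarrow> DF (2 * k - 1) (code t @ [False])"
proof -
  assume k: "nverts t = k"
  have l: "length (code t) + 2 = 2 * k" using length_code[of t] k by simp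
  have b: "bal (code t)" by (rule bal_code)
  show ?thesis unfolding DF_def
  proof (intro conjI allI impI)
    show "length (code t @ [False]) = 2 * k - 1" using l by simp
    fix i assume "i < 2 * k - 1"
    hence "take i (code t @ [False]) = take i (code t)" using l by simp
    thus "0 \<le> hgt (take i (code t @ [False]))" using b by (simp add: bal_def)
  next
    show "hgt (code t @ [False]) = -1" using b by (simp add: bal_def)
  qed
qed

lemma DF_code:
  assumes "DF (2 * k - 1) x" "1 \<le> k"
  shows "\<exists>t. nverts t = k \<and> x = code t @ [False]"
proof -
  have lx: "length x = 2 * k - 1" and pos: "\<And>i. i < 2 * k - 1 \<Longrightarrow> 0 \<le> hgt (take i x)"
    and hx: "hgt x = -1" using assms by (auto simp: DF_def)
  have ne: "x \<noteq> []" using hx by auto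
  let ?u = "butlast x"
  have x: "x = ?u @ [last x]" using ne by simp
  have "2 * k - 2 = length x - 1" using lx by simp
  hence tu: "take (2 * k - 2) x = ?u" by (simp add: butlast_conv_take)
  have hu: "0 \<le> hgt ?u" using pos[of "2*k-2"] tu assms(2) by simp
  have hx2: "hgt x = hgt ?u + hgt [last x]" by (subst x, rule hgt_append)
  have lastx: "last x = False" using hx2 hx hu by (cases "last x") simp_all
  hence hu0: "hgt ?u = 0" using hx2 hx by simp
  have "bal ?u" unfolding bal_def
  proof (intro conjI allI hu0)
    fix i
    have "take i ?u = take (min i (2 * k - 2)) x" using tu by (metis min.commute take_take)
    moreover have "min i (2 * k - 2) < 2 * k - 1" using assms(2) by simp
    ultimately show "0 \<le> hgt (take i ?u)" using pos by simp
  qed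
  then obtain cs where cs: "fcode cs = ?u" using bal_decode by blast
  have "length (code (Node cs)) + 2 = 2 * nverts (Node cs)" by (rule length_code)
  hence "nverts (Node cs) = k" using cs lx assms(2) by (simp add: code_fcode)
  moreover have "x = code (Node cs) @ [False]" using x cs lastx by (simp add: code_fcode)
  ultimately show ?thesis by blast
qed

lemma DFset_image: "1 \<le> k \<Longrightarrow> DFset (2 * k - 1) = (\<lambda>t. code t @ [False]) ` trees_of_size k"
proof (intro equalityI subsetI)
  fix x assume "1 \<le> k" "x \<in> DFset (2 * k - 1)"
  then obtain t where "nverts t = k" "x = code t @ [False]" using DF_code unfolding DFset_def by blast
  thus "x \<in> (\<lambda>t. code t @ [False]) ` trees_of_size k" unfolding trees_of_size_def by blast
next
  fix x assume "x \<in> (\<lambda>t. code t @ [False]) ` trees_of_size k"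
  then obtain t where "nverts t = k" "x = code t @ [False]" unfolding trees_of_size_def by blast
  thus "x \<in> DFset (2 * k - 1)" using code_DF unfolding DFset_def by blast
qed

lemma inj_code_F: "inj_on (\<lambda>t. code t @ [False]) A"
  by (intro inj_onI) (auto intro: code_inj)

lemma finite_trees: "1 \<le> k \<Longrightarrow> finite (trees_of_size k)"
proof -
  assume "1 \<le> k"
  hence "finite ((\<lambda>t. code t @ [False]) ` trees_of_size k)" using finite_DFset[of "2*k-1"] DFset_image[of k] by simp
  thus ?thesis using finite_image_iff[OF inj_code_F] by blast
qed

lemma sum_trees:
  "1 \<le> k \<Longrightarrow> (\<Sum>x\<in>DFset (2 * k - 1). g x) = (\<Sum>t\<in>trees_of_size k. g (code t @ [False]))"
  using DFset_image[of k] sum.reindex[OF inj_code_F, of g "trees_of_size k"] by simp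



lemma card_sets_constr:
  assumes S: "S \<subseteq> {..<N}" and T: "T \<subseteq> S" and Tn: "card T \<le> n"
  shows "card {A. A \<subseteq> {..<N} \<and> card A = n \<and> A \<inter> S = T} = (N - card S) choose (n - card T)"
proof -
  have finS: "finite S" using S finite_subset by blast
  have finT: "finite T" using T finS finite_subset by blast
  let ?X = "{A. A \<subseteq> {..<N} \<and> card A = n \<and> A \<inter> S = T}"
  let ?Y = "{B. B \<subseteq> {..<N} - S \<and> card B = n - card T}"
  have 1: "A - S \<in> ?Y" if "A \<in> ?X" for A
  proof -
    have A: "A \<subseteq> {..<N}" "A \<inter> S = T" "card A = n" using that by auto
    have fA: "finite A" using A(1) finite_subset by blast
    have "A = (A - S) \<union> T" "(A - S) \<inter> T = {}" using A by auto
    hence "card A = card (A - S) + card T" using fA finT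
      by (metis card_Un_disjoint finite_Diff)
    thus ?thesis using A by auto
  qed
  have 2: "B \<union> T \<in> ?X" if "B \<in> ?Y" for B
  proof -
    have B: "B \<subseteq> {..<N} - S" "card B = n - card T" using that by auto
    have fB: "finite B" using B(1) finite_subset by blast
    have "B \<inter> T = {}" using B(1) T by blast
    hence "card (B \<union> T) = card B + card T" using fB finT by (simp add: card_Un_disjoint)
    hence "card (B \<union> T) = n" using B(2) Tn by simp
    moreover have "B \<union> T \<subseteq> {..<N}" using B(1) T S by blast
    moreover have "(B \<union> T) \<inter> S = T" using B(1) T by blast
    ultimately show ?thesis by blast
  qed
  have "card ?X = card ?Y"
  proof (rule bij_betw_same_card[of "\<lambda>A. A - S"], rule bij_betw_byWitness[of _ "\<lambda>B. B \<union> T"])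
    show "\<forall>A\<in>?X. A - S \<union> T = A" by blast
    show "\<forall>B\<in>?Y. B \<union> T - S = B" using T by blast
    show "(\<lambda>A. A - S) ` ?X \<subseteq> ?Y" using 1 by blast
    show "(\<lambda>B. B \<union> T) ` ?Y \<subseteq> ?X" using 2 by blast
  qed
  also have "\<dots> = card ({..<N} - S) choose (n - card T)" by (rule n_subsets) simp
  also have "card ({..<N} - S) = N - card S" using S finS by (simp add: card_Diff_subset)
  finally show ?thesis .
qed

lemma card_words_constr:
  assumes S: "S \<subseteq> {..<N}" and Tn: "card {p\<in>S. f p} \<le> n"
  shows "card {w. length w = N \<and> length (filter id w) = n \<and> (\<forall>p\<in>S. w ! p = f p)}
       = (N - card S) choose (n - card {p\<in>S. f p})"
proof -
  let ?T = "{p\<in>S. f p}"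
  let ?X = "{A. A \<subseteq> {..<N} \<and> card A = n \<and> A \<inter> S = ?T}"
  let ?W = "{w. length w = N \<and> length (filter id w) = n \<and> (\<forall>p\<in>S. w ! p = f p)}"
  let ?phi = "\<lambda>w. {i. i < N \<and> w ! i}"
  let ?psi = "\<lambda>A. map (\<lambda>i. i \<in> A) [0..<N]"
  have "card ?W = card ?X"
  proof (rule bij_betw_same_card[of ?phi], rule bij_betw_byWitness[of _ ?psi])
    show "\<forall>w\<in>?W. ?psi (?phi w) = w" by (auto intro: nth_equalityI)
    show "\<forall>A\<in>?X. ?phi (?psi A) = A" by auto
    show "?phi ` ?W \<subseteq> ?X"
    proof
      fix A assume "A \<in> ?phi ` ?W"
      then obtain w where w: "w \<in> ?W" and A: "A = ?phi w" by blast
      have lw: "length w = N" "length (filter id w) = n" using w by auto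
      have "card {i. i < length w \<and> id (w ! i)} = n" using lw(2) by (simp only: length_filter_conv_card)
      hence "card A = n" using A lw(1) by simp
      moreover have "A \<inter> S = ?T" using w A S by auto
      ultimately show "A \<in> ?X" using A by auto
    qed
    show "?psi ` ?X \<subseteq> ?W"
    proof
      fix w assume "w \<in> ?psi ` ?X"
      then obtain A where A: "A \<in> ?X" and w: "w = ?psi A" by blast
      have "length (filter id w) = card {i. i < N \<and> i \<in> A}"
        using w by (simp add: length_filter_conv_card cong: conj_cong)
      also have "{i. i < N \<and> i \<in> A} = A" using A by auto
      also have "card A = n" using A by simp
      finally have "length (filter id w) = n" .
      moreover have "\<forall>p\<in>S. w ! p = f p"
      proof
        fix p assume p: "p \<in> S"
        hence pN: "p < N" using S by auto
        hence "w ! p = (p \<in> A)" using w by simp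
        also have "\<dots> = f p" using A p by blast
        finally show "w ! p = f p" .
      qed
      ultimately show "w \<in> ?W" using w by simp
    qed
  qed
  also have "\<dots> = (N - card S) choose (n - card ?T)"
    by (rule card_sets_constr[OF S _ Tn]) auto
  finally show ?thesis .
qed

lemma Wset_iff: "w \<in> Wset (2 * n + 1) \<longleftrightarrow> length w = 2 * n + 1 \<and> length (filter id w) = n"
  by (auto simp: Wset_def hgt_def)



lemma bij_mod: assumes "0 < N" shows "bij_betw (\<lambda>j. (j + c) mod N) {..<N} {..<(N::nat)}"
proof -
  have inj: "inj_on (\<lambda>j. (j + c) mod N) {..<N}"
  proof (rule inj_onI)
    fix x y assume xy: "x \<in> {..<N}" "y \<in> {..<N}" "(x + c) mod N = (y + c) mod N"
    have *: "a = b" if "a < N" "b < N" "(a + c) mod N = (b + c) mod N" "a \<le> b" for a b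
    proof -
      have "N dvd (b + c) - (a + c)" using mod_eq_dvd_iff_nat[of "a + c" "b + c" N] that by simp
      hence "N dvd b - a" by simp
      moreover have "b - a < N" using that by simp
      ultimately have "b - a = 0" by (meson dvd_imp_le not_gr0 not_le)
      thus ?thesis using that(4) by simp
    qed
    show "x = y"
    proof (cases "x \<le> y")
      case True thus ?thesis using *[of x y] xy by simp
    next
      case False thus ?thesis using *[of y x] xy by simp
    qed
  qed
  have sub: "(\<lambda>j. (j + c) mod N) ` {..<N} \<subseteq> {..<N}" using assms by auto
  have "(\<lambda>j. (j + c) mod N) ` {..<N} = {..<N}"
    by (rule endo_inj_surj[OF _ sub inj]) simp
  thus ?thesis using inj by (simp add: bij_betw_def)
qed

definition mt :: "bool list \<Rightarrow> bool list \<Rightarrow> nat \<Rightarrow> bool" where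
  "mt P w j \<longleftrightarrow> take (length P) (rotate j w) = P"

definition cyc :: "bool list \<Rightarrow> bool list \<Rightarrow> nat" where
  "cyc P w = (\<Sum>j<length w. if mt P w j then 1 else 0)"

lemma mt_rotate: "mt P (rotate r w) j \<longleftrightarrow> mt P w ((j + r) mod length w)"
  unfolding mt_def by (simp add: rotate_rotate rotate_conv_mod[of "j + r" w])

lemma cyc_rotate: "cyc P (rotate r w) = cyc P w"
proof (cases "w = []")
  case True thus ?thesis by simp
next
  case False
  hence N: "0 < length w" by simp
  have "cyc P (rotate r w) = (\<Sum>j<length w. (\<lambda>d. if mt P w d then 1 else 0) ((j + r) mod length w))"
    unfolding cyc_def by (simp add: mt_rotate)
  also have "\<dots> = (\<Sum>d<length w. if mt P w d then 1 else 0)"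
    by (rule sum.reindex_bij_betw[OF bij_mod[OF N]])
  finally show ?thesis by (simp add: cyc_def)
qed

lemma cyc_code:
  assumes P: "P = True # P'" and L: "length P \<le> length (code t) + 1"
  shows "cyc P (code t @ [False]) = occR P (code t) (False # code t @ [False])"
proof -
  let ?x = "code t @ [False]" let ?n = "length (code t)"
  have "cyc P ?x = (\<Sum>j<?n. if mt P ?x j then 1 else 0) + (if mt P ?x ?n then 1 else 0)"
    unfolding cyc_def by simp
  also have "mt P ?x ?n = False"
  proof -
    have "rotate ?n ?x = False # code t" by (simp add: rotate_drop_take)
    thus ?thesis unfolding mt_def P by simp
  qed
  also have "(\<Sum>j<?n. if mt P ?x j then 1 else 0) = occR P (code t) (False # code t @ [False])"
    unfolding occR_def
  proof (rule sum.cong[OF refl])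
    fix j assume "j \<in> {..<?n}"
    hence j: "j < ?n" by simp
    have r: "rotate j ?x = drop j ?x @ take j ?x" using j by (simp add: rotate_drop_take)
    have d: "drop j (code t @ False # code t @ [False]) = drop j ?x @ ?x" using j by simp
    have m: "length P - length (drop j ?x) \<le> j" using L j by simp
    have "take (length P) (drop j ?x @ take j ?x) = take (length P) (drop j ?x) @ take (length P - length (drop j ?x)) (take j ?x)"
      by (rule take_append)
    also have "take (length P - length (drop j ?x)) (take j ?x) = take (length P - length (drop j ?x)) ?x"
      using m by (simp add: min_def)
    also have "take (length P) (drop j ?x) @ take (length P - length (drop j ?x)) ?x = take (length P) (drop j ?x @ ?x)"
      by (rule take_append[symmetric])
    finally have "take (length P) (drop j ?x @ take j ?x) = take (length P) (drop j ?x @ ?x)" .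
    thus "(if mt P ?x j then 1 else 0) = (if take (length P) (drop j (code t @ False # code t @ [False])) = P then 1 else 0)"
      unfolding mt_def r d by simp
  qed
  finally show ?thesis by simp
qed

lemma count_cyc:
  assumes "length (pat F) \<le> length (code t) + 1"
  shows "\<exists>\<delta>\<le>1. count_prefix F t = \<delta> + cyc (pat F) (code t @ [False])"
proof -
  have "cyc (pat F) (code t @ [False]) = occR (pat F) (code t) (False # code t @ [False])"
    by (rule cyc_code[OF _ assms]) (simp add: pat_def)
  thus ?thesis using count_prefix_occR[of F t "False # code t @ [False]"] by auto
qed



lemma sum_W_rotate:
  assumes "j \<le> N"
  shows "(\<Sum>w\<in>Wset N. G (rotate j w)) = (\<Sum>u\<in>Wset N. G u)"
proof (rule sum.reindex_bij_witness[of _ "rotate (N - j)" "rotate j"])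
  fix a assume a: "a \<in> Wset N"
  hence la: "length a = N" by (simp add: Wset_def)
  show "rotate (N - j) (rotate j a) = a" using assms la by (simp add: rotate_rotate)
  show "rotate j a \<in> Wset N" using a by (simp add: Wset_def)
  show "G (rotate j a) = G (rotate j a)" ..
next
  fix b assume b: "b \<in> Wset N"
  hence lb: "length b = N" by (simp add: Wset_def)
  show "rotate j (rotate (N - j) b) = b" using assms lb by (simp add: rotate_rotate)
  show "rotate (N - j) b \<in> Wset N" using b by (simp add: Wset_def)
qed

lemma sum_indicator: "finite A \<Longrightarrow> (\<Sum>x\<in>A. if Q x then 1 else 0 :: nat) = card {x\<in>A. Q x}"
proof -
  assume A: "finite A"
  have "(\<Sum>x\<in>A \<inter> {x. Q x}. 1::nat) = (\<Sum>x\<in>A. if x \<in> {x. Q x} then 1 else 0)"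
    by (rule sum.inter_restrict[OF A])
  moreover have "A \<inter> {x. Q x} = {x\<in>A. Q x}" by blast
  ultimately show ?thesis by simp
qed

lemma sumW_cyc:
  "(\<Sum>w\<in>Wset N. cyc P w) = N * card {w\<in>Wset N. take (length P) w = P}"
proof -
  have "(\<Sum>w\<in>Wset N. cyc P w) = (\<Sum>w\<in>Wset N. \<Sum>j<N. if mt P w j then 1 else 0)"
    by (rule sum.cong[OF refl]) (simp add: cyc_def Wset_def)
  also have "\<dots> = (\<Sum>j<N. \<Sum>w\<in>Wset N. if mt P w j then 1 else 0)" by (rule sum.swap)
  also have "\<dots> = (\<Sum>j<N. \<Sum>w\<in>Wset N. if take (length P) w = P then 1 else 0)"
  proof (rule sum.cong[OF refl])
    fix j assume "j \<in> {..<N}"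
    hence "j \<le> N" by simp
    from sum_W_rotate[OF this, of "\<lambda>u. if take (length P) u = P then 1 else (0::nat)"]
    show "(\<Sum>w\<in>Wset N. if mt P w j then 1 else (0::nat)) = (\<Sum>w\<in>Wset N. if take (length P) w = P then 1 else (0::nat))"
      by (simp add: mt_def)
  qed
  also have "\<dots> = N * card {w\<in>Wset N. take (length P) w = P}"
    by (simp add: sum_indicator finite_Wset)
  finally show ?thesis .
qed

lemma sumW_cyc2:
  assumes N: "0 < N"
  shows "(\<Sum>w\<in>Wset N. (cyc P w)^2) = N * (\<Sum>d<N. card {w\<in>Wset N. take (length P) w = P \<and> mt P w d})"
proof -
  let ?f = "\<lambda>d. card {w\<in>Wset N. take (length P) w = P \<and> mt P w d}"
  have "(\<Sum>w\<in>Wset N. (cyc P w)^2) = (\<Sum>w\<in>Wset N. \<Sum>j<N. \<Sum>j'<N. if mt P w j \<and> mt P w j' then 1 else (0::nat))"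
  proof (rule sum.cong[OF refl])
    fix w assume "w \<in> Wset N"
    hence lw: "length w = N" by (simp add: Wset_def)
    have "(cyc P w)^2 = (\<Sum>j<N. if mt P w j then 1 else 0) * (\<Sum>j'<N. if mt P w j' then 1 else (0::nat))"
      by (simp add: cyc_def lw power2_eq_square)
    also have "\<dots> = (\<Sum>j<N. \<Sum>j'<N. (if mt P w j then 1 else 0) * (if mt P w j' then 1 else (0::nat)))"
      by (rule sum_product)
    also have "\<dots> = (\<Sum>j<N. \<Sum>j'<N. if mt P w j \<and> mt P w j' then 1 else (0::nat))"
      by (intro sum.cong refl) simp
    finally show "(cyc P w)^2 = (\<Sum>j<N. \<Sum>j'<N. if mt P w j \<and> mt P w j' then 1 else (0::nat))" .
  qed
  also have "\<dots> = (\<Sum>j<N. \<Sum>w\<in>Wset N. \<Sum>j'<N. if mt P w j \<and> mt P w j' then 1 else 0)" by (rule sum.swap)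
  also have "\<dots> = (\<Sum>j<N. \<Sum>j'<N. \<Sum>w\<in>Wset N. if mt P w j \<and> mt P w j' then 1 else 0)"
    by (rule sum.cong[OF refl], rule sum.swap)
  also have "\<dots> = (\<Sum>j<N. \<Sum>d<N. ?f d)"
  proof (rule sum.cong[OF refl])
    fix j assume "j \<in> {..<N}"
    hence j: "j < N" by simp
    have "(\<Sum>j'<N. \<Sum>w\<in>Wset N. if mt P w j \<and> mt P w j' then 1 else 0) = (\<Sum>j'<N. ?f ((j' + (N - j)) mod N))"
    proof (rule sum.cong[OF refl])
      fix j' assume "j' \<in> {..<N}"
      hence j': "j' < N" by simp
      let ?H = "\<lambda>u. if take (length P) u = P \<and> mt P u ((j' + (N - j)) mod N) then 1 else (0::nat)"
      have "(\<Sum>w\<in>Wset N. if mt P w j \<and> mt P w j' then 1 else 0) = (\<Sum>w\<in>Wset N. ?H (rotate j w))"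
      proof (rule sum.cong[OF refl])
        fix w assume "w \<in> Wset N"
        hence lw: "length w = N" by (simp add: Wset_def)
        have "((j' + (N - j)) mod N + j) mod N = j'"
        proof -
          have "((j' + (N - j)) mod N + j) mod N = (j' + (N - j) + j) mod N" by (simp add: mod_add_left_eq)
          also have "j' + (N - j) + j = j' + N" using j by simp
          finally show ?thesis using j' by simp
        qed
        hence "mt P (rotate j w) ((j' + (N - j)) mod N) \<longleftrightarrow> mt P w j'"
          by (simp add: mt_rotate lw)
        moreover have "take (length P) (rotate j w) = P \<longleftrightarrow> mt P w j" by (simp add: mt_def)
        ultimately show "(if mt P w j \<and> mt P w j' then 1 else 0) = ?H (rotate j w)" by simp
      qed
      also have "\<dots> = (\<Sum>u\<in>Wset N. ?H u)" using sum_W_rotate[of j N ?H] j by simp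
      also have "\<dots> = ?f ((j' + (N - j)) mod N)" by (simp add: sum_indicator finite_Wset)
      finally show "(\<Sum>w\<in>Wset N. if mt P w j \<and> mt P w j' then 1 else 0) = ?f ((j' + (N - j)) mod N)" .
    qed
    also have "\<dots> = (\<Sum>d<N. ?f d)" by (rule sum.reindex_bij_betw[OF bij_mod[OF N]])
    finally show "(\<Sum>j'<N. \<Sum>w\<in>Wset N. if mt P w j \<and> mt P w j' then 1 else 0) = (\<Sum>d<N. ?f d)" .
  qed
  also have "\<dots> = N * (\<Sum>d<N. ?f d)" by simp
  finally show ?thesis .
qed



lemma take_eq_nth: "length P \<le> length w \<Longrightarrow> take (length P) w = P \<longleftrightarrow> (\<forall>p<length P. w ! p = P ! p)"
  by (auto simp: list_eq_iff_nth_eq)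

lemma count1:
  assumes N: "N = 2 * n + 1" and L: "length P \<le> N" and a: "length (filter id P) \<le> n"
  shows "card {w\<in>Wset N. take (length P) w = P} = (N - length P) choose (n - length (filter id P))"
proof -
  let ?L = "length P"
  have "{w\<in>Wset N. take ?L w = P} = {w. length w = N \<and> length (filter id w) = n \<and> (\<forall>p\<in>{..<?L}. w ! p = P ! p)}"
  proof -
    have WN: "\<And>w. w \<in> Wset N \<longleftrightarrow> length w = N \<and> length (filter id w) = n" using Wset_iff N by simp
    have "\<And>w. length w = N \<Longrightarrow> take ?L w = P \<longleftrightarrow> (\<forall>p\<in>{..<?L}. w ! p = P ! p)"
      using take_eq_nth[of P] L by (simp add: lessThan_iff Ball_def)
    thus ?thesis using WN by blast
  qed
  moreover have T: "card {p\<in>{..<?L}. P ! p} = length (filter id P)"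
    by (simp add: length_filter_conv_card lessThan_def Collect_conj_eq[symmetric])
  moreover have "card {w. length w = N \<and> length (filter id w) = n \<and> (\<forall>p\<in>{..<?L}. w ! p = P ! p)}
      = (N - card {..<?L}) choose (n - card {p\<in>{..<?L}. P ! p})"
    by (rule card_words_constr) (use L a T in auto)
  ultimately show ?thesis by simp
qed

lemma mt_far:
  assumes "length w = N" "d + length P \<le> N" "0 < length P"
  shows "mt P w d \<longleftrightarrow> (\<forall>p\<in>{d..<d + length P}. w ! p = P ! (p - d))"
proof -
  have dN: "d < N" using assms(2,3) by linarith
  have "rotate d w = drop d w @ take d w" using assms dN by (simp add: rotate_drop_take)
  hence "take (length P) (rotate d w) = take (length P) (drop d w)" using assms by simp
  hence "mt P w d \<longleftrightarrow> take (length P) (drop d w) = P" by (simp add: mt_def)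
  also have "\<dots> \<longleftrightarrow> (\<forall>i<length P. drop d w ! i = P ! i)" by (rule take_eq_nth) (use assms in simp)
  also have "\<dots> \<longleftrightarrow> (\<forall>i<length P. w ! (d + i) = P ! i)" using assms by simp
  also have "\<dots> \<longleftrightarrow> (\<forall>p\<in>{d..<d + length P}. w ! p = P ! (p - d))"
  proof
    assume H: "\<forall>i<length P. w ! (d + i) = P ! i"
    show "\<forall>p\<in>{d..<d + length P}. w ! p = P ! (p - d)"
    proof
      fix p assume "p \<in> {d..<d + length P}"
      hence "p - d < length P" "d + (p - d) = p" by auto
      thus "w ! p = P ! (p - d)" using H by metis
    qed
  next
    assume H: "\<forall>p\<in>{d..<d + length P}. w ! p = P ! (p - d)"
    show "\<forall>i<length P. w ! (d + i) = P ! i"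
    proof (intro allI impI)
      fix i assume "i < length P"
      hence "d + i \<in> {d..<d + length P}" by simp
      thus "w ! (d + i) = P ! i" using H by fastforce
    qed
  qed
  finally show ?thesis .
qed

lemma count2:
  assumes N: "N = 2 * n + 1" and d: "length P \<le> d" "d + length P \<le> N" and a: "2 * length (filter id P) \<le> n"
    and L0: "0 < length P"
  shows "card {w\<in>Wset N. take (length P) w = P \<and> mt P w d} = (N - 2 * length P) choose (n - 2 * length (filter id P))"
proof -
  let ?L = "length P"
  let ?S = "{..<?L} \<union> {d..<d + ?L}"
  let ?g = "\<lambda>p. if p < ?L then P ! p else P ! (p - d)"
  have WN: "\<And>w. w \<in> Wset N \<longleftrightarrow> length w = N \<and> length (filter id w) = n" using Wset_iff N by simp
  have eq: "{w\<in>Wset N. take ?L w = P \<and> mt P w d} = {w. length w = N \<and> length (filter id w) = n \<and> (\<forall>p\<in>?S. w ! p = ?g p)}"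
  proof -
    have "take ?L w = P \<and> mt P w d \<longleftrightarrow> (\<forall>p\<in>?S. w ! p = ?g p)" if lw: "length w = N" for w
    proof -
      have "take ?L w = P \<longleftrightarrow> (\<forall>p\<in>{..<?L}. w ! p = ?g p)"
        using take_eq_nth[of P w] lw d by (auto simp: Ball_def)
      moreover have "mt P w d \<longleftrightarrow> (\<forall>p\<in>{d..<d + ?L}. w ! p = ?g p)"
        using mt_far[OF lw d(2) L0] d by auto
      ultimately show ?thesis by blast
    qed
    thus ?thesis using WN by blast
  qed
  have disj: "{..<?L} \<inter> {d..<d + ?L} = {}" using d by auto
  have cS: "card ?S = 2 * ?L" using disj by (simp add: card_Un_disjoint)
  have T1: "card {p\<in>{..<?L}. P ! p} = length (filter id P)"
    by (simp add: length_filter_conv_card lessThan_def Collect_conj_eq[symmetric])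
  have T2: "card {p\<in>{d..<d + ?L}. P ! (p - d)} = length (filter id P)"
  proof -
    have "{p\<in>{d..<d + ?L}. P ! (p - d)} = (\<lambda>i. i + d) ` {p\<in>{..<?L}. P ! p}"
    proof (intro equalityI subsetI)
      fix p assume p: "p \<in> {p\<in>{d..<d + ?L}. P ! (p - d)}"
      hence "p - d \<in> {p\<in>{..<?L}. P ! p}" "p = (p - d) + d" by auto
      thus "p \<in> (\<lambda>i. i + d) ` {p\<in>{..<?L}. P ! p}" by blast
    qed auto
    moreover have "inj_on (\<lambda>i. i + d) {p\<in>{..<?L}. P ! p}" by (simp add: inj_on_def)
    ultimately show ?thesis using T1 by (simp add: card_image)
  qed
  have cT: "card {p\<in>?S. ?g p} = 2 * length (filter id P)"
  proof -
    have "{p\<in>?S. ?g p} = {p\<in>{..<?L}. P ! p} \<union> {p\<in>{d..<d + ?L}. P ! (p - d)}" using d by auto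
    moreover have "{p\<in>{..<?L}. P ! p} \<inter> {p\<in>{d..<d + ?L}. P ! (p - d)} = {}" using disj by blast
    ultimately show ?thesis using T1 T2 by (simp add: card_Un_disjoint)
  qed
  have "card {w. length w = N \<and> length (filter id w) = n \<and> (\<forall>p\<in>?S. w ! p = ?g p)}
      = (N - card ?S) choose (n - card {p\<in>?S. ?g p})"
    by (rule card_words_constr) (use d a cT in auto)
  thus ?thesis using eq cS cT by simp
qed

lemma sum_f_bound:
  assumes N: "N = 2 * n + 1" and L: "2 * length P \<le> N" and a: "2 * length (filter id P) \<le> n"
    and L0: "0 < length P"
  shows "(\<Sum>d<N. card {w\<in>Wset N. take (length P) w = P \<and> mt P w d})
      \<le> N * ((N - 2 * length P) choose (n - 2 * length (filter id P)))
        + 2 * length P * ((N - length P) choose (n - length (filter id P)))"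
proof -
  let ?L = "length P"
  let ?C1 = "(N - ?L) choose (n - length (filter id P))"
  let ?C2 = "(N - 2 * ?L) choose (n - 2 * length (filter id P))"
  let ?f = "\<lambda>d. card {w\<in>Wset N. take (length P) w = P \<and> mt P w d}"
  have C1: "card {w\<in>Wset N. take ?L w = P} = ?C1" by (rule count1) (use N L a in auto)
  have b: "?f d \<le> ?C2 + (if d < ?L \<or> N < d + ?L then ?C1 else 0)" for d
  proof (cases "d < ?L \<or> N < d + ?L")
    case True
    have "?f d \<le> card {w\<in>Wset N. take ?L w = P}"
      by (rule card_mono) (auto simp: finite_Wset)
    thus ?thesis using True C1 by simp
  next
    case False
    thus ?thesis using count2[OF N _ _ a L0, of d] by simp
  qed
  have "(\<Sum>d<N. ?f d) \<le> (\<Sum>d<N. ?C2 + (if d < ?L \<or> N < d + ?L then ?C1 else 0))"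
    by (rule sum_mono) (rule b)
  also have "\<dots> = N * ?C2 + (\<Sum>d<N. if d < ?L \<or> N < d + ?L then ?C1 else 0)"
    by (simp add: sum.distrib)
  finally have s1: "(\<Sum>d<N. ?f d) \<le> N * ?C2 + (\<Sum>d<N. if d < ?L \<or> N < d + ?L then ?C1 else 0)" .
  have s2: "(\<Sum>d<N. if d < ?L \<or> N < d + ?L then ?C1 else 0) = card {d\<in>{..<N}. d < ?L \<or> N < d + ?L} * ?C1"
    by (simp add: sum.If_cases Int_def)
  have "card {d\<in>{..<N}. d < ?L \<or> N < d + ?L} \<le> 2 * ?L"
  proof -
    have "{d\<in>{..<N}. d < ?L \<or> N < d + ?L} \<subseteq> {..<?L} \<union> {N - ?L..<N}" by auto
    hence "card {d\<in>{..<N}. d < ?L \<or> N < d + ?L} \<le> card ({..<?L} \<union> {N - ?L..<N})"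
      by (rule card_mono[rotated]) simp
    also have "\<dots> \<le> card {..<?L} + card {N - ?L..<N}" by (rule card_Un_le)
    also have "\<dots> \<le> 2 * ?L" by simp
    finally show ?thesis .
  qed
  hence s3: "card {d\<in>{..<N}. d < ?L \<or> N < d + ?L} * ?C1 \<le> 2 * ?L * ?C1" by (rule mult_right_mono) simp
  show ?thesis using s1 s2 s3 by linarith
qed




definition Rb :: "nat \<Rightarrow> nat \<Rightarrow> nat \<Rightarrow> real" where
  "Rb s q n = real ((2 * n + 1 - s) choose (n - q)) / real ((2 * n + 1) choose n)"

lemma lim_a: "(\<lambda>n. (real n - real q) / (2 * real n + 1 - real s)) \<longlonglongrightarrow> 1 / 2"
  by real_asymp

lemma lim_b: "(\<lambda>n. (real n + 1 - real s) / (2 * real n + 1 - real s)) \<longlonglongrightarrow> 1 / 2"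
  by real_asymp

lemma div_aux: "(x::real) * c = m * c' \<Longrightarrow> 0 < m \<Longrightarrow> c' = c * (x / m)"
  by (simp add: field_simps)

lemma mult_div_aux: "(a * t) / c = a / c * (t::real)" by simp

lemma Rb_step0:
  assumes "s + 2 \<le> n"
  shows "Rb (Suc s) 0 n = Rb s 0 n * ((real n + 1 - real s) / (2 * real n + 1 - real s))"
proof -
  let ?M = "2 * n + 1 - s"
  have e: "(?M - n) * (?M choose n) = ?M * ((?M - 1) choose n)" by (rule binomial_absorb_comp)
  have M1: "?M - 1 = 2 * n + 1 - Suc s" by simp
  have Mn: "?M - n = n + 1 - s" using assms by simp
  have e': "real (?M - n) * real (?M choose n) = real ?M * real ((?M - 1) choose n)"
    using e by (metis of_nat_mult)
  have "real ((?M - 1) choose n) = real (?M choose n) * (real (?M - n) / real ?M)"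
    by (rule div_aux[OF e']) (use assms in simp)
  moreover have q1: "real (n + 1 - s) = real n + 1 - real s" and q2: "real ?M = 2 * real n + 1 - real s"
    using assms by auto
  ultimately have h: "real ((2 * n + 1 - Suc s) choose n) = real (?M choose n) * ((real n + 1 - real s) / (2 * real n + 1 - real s))"
    unfolding M1 Mn q1 q2 by simp
  show ?thesis unfolding Rb_def diff_zero h by (rule mult_div_aux)
qed

lemma Rb_step1:
  assumes "s + q + 2 \<le> n"
  shows "Rb (Suc s) (Suc q) n = Rb s q n * ((real n - real q) / (2 * real n + 1 - real s))"
proof -
  let ?M = "2 * n + 1 - s" let ?r = "n - q"
  have r: "?r = Suc (n - Suc q)" using assms by simp
  have e: "Suc (n - Suc q) * (?M choose Suc (n - Suc q)) = ?M * ((?M - 1) choose (n - Suc q))"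
    by (rule binomial_absorption)
  have M1: "?M - 1 = 2 * n + 1 - Suc s" by simp
  have e': "real ?r * real (?M choose ?r) = real ?M * real ((?M - 1) choose (n - Suc q))"
    using e unfolding r[symmetric] by (metis of_nat_mult)
  have "real ((?M - 1) choose (n - Suc q)) = real (?M choose ?r) * (real ?r / real ?M)"
    by (rule div_aux[OF e']) (use assms in simp)
  moreover have q1: "real ?r = real n - real q" and q2: "real ?M = 2 * real n + 1 - real s"
    using assms by auto
  ultimately have h: "real ((2 * n + 1 - Suc s) choose (n - Suc q)) = real (?M choose ?r) * ((real n - real q) / (2 * real n + 1 - real s))"
    unfolding M1 q1 q2 by simp
  show ?thesis unfolding Rb_def h by (rule mult_div_aux)
qed

lemma Rb_lim: "q \<le> s \<Longrightarrow> Rb s q \<longlonglongrightarrow> 1 / 2 ^ s"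
proof (induction s arbitrary: q)
  case 0
  hence "Rb 0 q = (\<lambda>n. 1)" using 0 by (auto simp: Rb_def)
  thus ?case by simp
next
  case (Suc s)
  show ?case
  proof (cases q)
    case 0
    have "(\<lambda>n. Rb s 0 n * ((real n + 1 - real s) / (2 * real n + 1 - real s))) \<longlonglongrightarrow> 1 / 2 ^ s * (1 / 2)"
      by (rule tendsto_mult[OF Suc.IH lim_b]) simp
    moreover have "eventually (\<lambda>n. Rb s 0 n * ((real n + 1 - real s) / (2 * real n + 1 - real s)) = Rb (Suc s) q n) sequentially"
      using eventually_ge_at_top[of "s + 2"] by eventually_elim (simp add: Rb_step0 0)
    ultimately have "Rb (Suc s) q \<longlonglongrightarrow> 1 / 2 ^ s * (1 / 2)" by (rule Lim_transform_eventually)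
    thus ?thesis by (simp add: mult.commute)
  next
    case (Suc q')
    hence q': "q' \<le> s" using Suc.prems by simp
    have "(\<lambda>n. Rb s q' n * ((real n - real q') / (2 * real n + 1 - real s))) \<longlonglongrightarrow> 1 / 2 ^ s * (1 / 2)"
      by (rule tendsto_mult[OF Suc.IH[OF q'] lim_a])
    moreover have "eventually (\<lambda>n. Rb s q' n * ((real n - real q') / (2 * real n + 1 - real s)) = Rb (Suc s) q n) sequentially"
      using eventually_ge_at_top[of "s + q' + 2"] by eventually_elim (simp add: Rb_step1 Suc)
    ultimately have "Rb (Suc s) q \<longlonglongrightarrow> 1 / 2 ^ s * (1 / 2)" by (rule Lim_transform_eventually)
    thus ?thesis by (simp add: mult.commute)
  qed
qed



lemma pat_length: "length (pat F) = 2 * forest_verts F + 2"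
  by (simp add: pat_def length_fcode forest_verts_def)

lemma pat_count: "length (filter id (pat F)) = forest_verts F + 2"
  using count_fcode[of F] length_fcode[of F] by (simp add: pat_def forest_verts_def)

lemma F1:
  "real (card (trees_of_size (n + 1))) * real (2 * n + 1) = real ((2 * n + 1) choose n)"
proof -
  let ?N = "2 * n + 1" let ?T = "trees_of_size (n + 1)"
  have "(\<Sum>w\<in>Wset ?N. (1::real)) = real ?N * (\<Sum>x\<in>DFset ?N. 1)"
    by (rule sum_transfer) simp
  moreover have "(\<Sum>x\<in>DFset ?N. (1::real)) = (\<Sum>t\<in>?T. 1)"
    using sum_trees[of "n + 1" "\<lambda>_. 1::real"] by simp
  moreover have "card (Wset ?N) = ?N choose n"
    using count1[of ?N n "[]"] by simp
  ultimately show ?thesis by simp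
qed

lemma F2:
  assumes L: "length P \<le> 2 * n + 1" and a: "length (filter id P) \<le> n"
  shows "(\<Sum>t\<in>trees_of_size (n + 1). real (cyc P (code t @ [False])))
       = real ((2 * n + 1 - length P) choose (n - length (filter id P)))"
proof -
  let ?N = "2 * n + 1" let ?T = "trees_of_size (n + 1)"
  have "(\<Sum>w\<in>Wset ?N. real (cyc P w)) = real ?N * (\<Sum>x\<in>DFset ?N. real (cyc P x))"
    by (rule sum_transfer) (simp add: cyc_rotate)
  also have "(\<Sum>x\<in>DFset ?N. real (cyc P x)) = (\<Sum>t\<in>?T. real (cyc P (code t @ [False])))"
    using sum_trees[of "n + 1" "\<lambda>x. real (cyc P x)"] by simp
  finally have 1: "(\<Sum>w\<in>Wset ?N. real (cyc P w)) = real ?N * (\<Sum>t\<in>?T. real (cyc P (code t @ [False])))" .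
  have "(\<Sum>w\<in>Wset ?N. real (cyc P w)) = real (\<Sum>w\<in>Wset ?N. cyc P w)" by simp
  also have "\<dots> = real ?N * real ((?N - length P) choose (n - length (filter id P)))"
  proof -
    have "(\<Sum>w\<in>Wset ?N. cyc P w) = ?N * ((?N - length P) choose (n - length (filter id P)))"
      using sumW_cyc[where N="?N" and P=P] count1[of ?N n P] L a by simp
    thus ?thesis by (simp only: of_nat_mult)
  qed
  finally show ?thesis using 1 by simp
qed

lemma F3:
  assumes L: "2 * length P \<le> 2 * n + 1" and a: "2 * length (filter id P) \<le> n" and L0: "0 < length P"
  shows "(\<Sum>t\<in>trees_of_size (n + 1). real (cyc P (code t @ [False]))^2)
       \<le> real (2 * n + 1) * real ((2 * n + 1 - 2 * length P) choose (n - 2 * length (filter id P)))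
         + 2 * real (length P) * real ((2 * n + 1 - length P) choose (n - length (filter id P)))"
proof -
  let ?N = "2 * n + 1" let ?T = "trees_of_size (n + 1)"
  let ?C1 = "(?N - length P) choose (n - length (filter id P))"
  let ?C2 = "(?N - 2 * length P) choose (n - 2 * length (filter id P))"
  have "(\<Sum>w\<in>Wset ?N. real (cyc P w)^2) = real ?N * (\<Sum>x\<in>DFset ?N. real (cyc P x)^2)"
    by (rule sum_transfer) (simp add: cyc_rotate)
  also have "(\<Sum>x\<in>DFset ?N. real (cyc P x)^2) = (\<Sum>t\<in>?T. real (cyc P (code t @ [False]))^2)"
    using sum_trees[of "n + 1" "\<lambda>x. real (cyc P x)^2"] by simp
  finally have 1: "(\<Sum>w\<in>Wset ?N. real (cyc P w)^2) = real ?N * (\<Sum>t\<in>?T. real (cyc P (code t @ [False]))^2)" .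
  have "(\<Sum>w\<in>Wset ?N. real (cyc P w)^2) = real (\<Sum>w\<in>Wset ?N. (cyc P w)^2)" by simp
  also have "\<dots> = real (?N * (\<Sum>d<?N. card {w\<in>Wset ?N. take (length P) w = P \<and> mt P w d}))"
  proof -
    have pos: "0 < 2 * n + 1" by simp
    show ?thesis by (simp only: sumW_cyc2[where N="?N" and P=P, OF pos])
  qed
  also have "\<dots> = real ?N * real (\<Sum>d<?N. card {w\<in>Wset ?N. take (length P) w = P \<and> mt P w d})"
    by (rule of_nat_mult)
  also have "\<dots> \<le> real ?N * real (?N * ?C2 + 2 * length P * ?C1)"
    using sum_f_bound[of ?N n P] L a L0 by (intro mult_left_mono) (simp_all only: of_nat_le_iff of_nat_0_le_iff)
  finally have "real ?N * (\<Sum>t\<in>?T. real (cyc P (code t @ [False]))^2) \<le> real ?N * real (?N * ?C2 + 2 * length P * ?C1)"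
    using 1 by simp
  hence "(\<Sum>t\<in>?T. real (cyc P (code t @ [False]))^2) \<le> real (?N * ?C2 + 2 * length P * ?C1)"
    by (rule mult_left_le_imp_le) simp
  thus ?thesis by (simp only: of_nat_add of_nat_mult of_nat_numeral)
qed

definition rhoseq :: "nat \<Rightarrow> nat \<Rightarrow> real \<Rightarrow> nat \<Rightarrow> real" where
  "rhoseq L a \<mu> n = ((2 * real n + 1) / (real n + 1))^2 * Rb (2 * L) (2 * a) n
     + 2 * real L * ((2 * real n + 1) / (real n + 1)) * (1 / (real n + 1)) * Rb L a n
     - 2 * \<mu> * ((2 * real n + 1) / (real n + 1)) * Rb L a n + \<mu>^2"

lemma rhoseq_lim:
  assumes "a \<le> L"
  shows "rhoseq L a \<mu> \<longlonglongrightarrow> 2^2 * (1 / 2 ^ (2 * L)) + 2 * real L * 2 * 0 * (1 / 2 ^ L)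
     - 2 * \<mu> * 2 * (1 / 2 ^ L) + \<mu>^2"
proof -
  have q: "(\<lambda>n. (2 * real n + 1) / (real n + 1)) \<longlonglongrightarrow> 2" by real_asymp
  have z: "(\<lambda>n. 1 / (real n + 1)) \<longlonglongrightarrow> 0" by real_asymp
  have r1: "Rb L a \<longlonglongrightarrow> 1 / 2 ^ L" using Rb_lim assms by blast
  have r2: "Rb (2 * L) (2 * a) \<longlonglongrightarrow> 1 / 2 ^ (2 * L)" using Rb_lim assms by simp
  show ?thesis unfolding rhoseq_def
    by (intro tendsto_intros q z r1 r2)
qed

lemma alg_id:
  fixes N k C C1 C2 cT L \<mu> :: real
  assumes "C = cT * N" "0 < N" "0 < k" "0 < C"
  shows "(N * C2 + 2 * L * C1) / k^2 - 2 * \<mu> * (C1 / k) + \<mu>^2 * cT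
     = ((N / k)^2 * (C2 / C) + 2 * L * (N / k) * (1 / k) * (C1 / C) - 2 * \<mu> * (N / k) * (C1 / C) + \<mu>^2) * cT"
proof -
  have "cT \<noteq> 0" using assms by auto
  thus ?thesis using assms by (simp add: field_simps power2_eq_square)
qed

lemma bad_bound:
  assumes L: "2 * length P \<le> 2 * n + 1" and a: "2 * length (filter id P) \<le> n" and L0: "0 < length P"
    and eta: "0 < \<eta>"
  shows "real (card {t\<in>trees_of_size (n + 1). \<not> \<bar>real (cyc P (code t @ [False])) / real (n + 1) - \<mu>\<bar> \<le> \<eta>}) * \<eta>^2
     \<le> rhoseq (length P) (length (filter id P)) \<mu> n * real (card (trees_of_size (n + 1)))"
proof -
  let ?T = "trees_of_size (n + 1)"
  let ?Y = "\<lambda>t. real (cyc P (code t @ [False])) / real (n + 1)"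
  let ?B = "{t\<in>?T. \<not> \<bar>?Y t - \<mu>\<bar> \<le> \<eta>}"
  let ?k = "real (n + 1)" let ?N = "real (2 * n + 1)"
  let ?L = "length P" let ?a = "length (filter id P)"
  let ?C = "real ((2 * n + 1) choose n)"
  let ?C1 = "real ((2 * n + 1 - ?L) choose (n - ?a))"
  let ?C2 = "real ((2 * n + 1 - 2 * ?L) choose (n - 2 * ?a))"
  let ?cT = "real (card ?T)"
  have fin: "finite ?T" using finite_trees by simp
  have kpos: "0 < ?k" by simp
  have Npos: "0 < ?N" by simp
  have Cpos: "0 < ?C" by simp
  have F1': "?C = ?cT * ?N" using F1[of n] by simp
  have "real (card ?B) * \<eta>^2 = (\<Sum>t\<in>?B. \<eta>^2)" by simp
  also have "\<dots> \<le> (\<Sum>t\<in>?B. (?Y t - \<mu>)^2)"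
  proof (rule sum_mono)
    fix t assume "t \<in> ?B"
    hence "\<eta> < \<bar>?Y t - \<mu>\<bar>" by simp
    hence "\<eta>^2 < \<bar>?Y t - \<mu>\<bar>^2" using eta by (intro power_strict_mono) auto
    thus "\<eta>^2 \<le> (?Y t - \<mu>)^2" by simp
  qed
  also have "\<dots> \<le> (\<Sum>t\<in>?T. (?Y t - \<mu>)^2)"
    by (rule sum_mono2[OF fin]) auto
  also have "(\<Sum>t\<in>?T. (?Y t - \<mu>)^2) = (\<Sum>t\<in>?T. ?Y t ^2) - 2 * \<mu> * (\<Sum>t\<in>?T. ?Y t) + \<mu>^2 * ?cT"
  proof -
    have "(\<Sum>t\<in>?T. (?Y t - \<mu>)^2) = (\<Sum>t\<in>?T. ?Y t ^2 - 2 * \<mu> * ?Y t + \<mu>^2)"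
      by (rule sum.cong) (simp_all add: power2_diff)
    also have "\<dots> = (\<Sum>t\<in>?T. ?Y t ^2) - (\<Sum>t\<in>?T. 2 * \<mu> * ?Y t) + (\<Sum>t\<in>?T. \<mu>^2)"
      by (simp add: sum.distrib sum_subtractf)
    also have "\<dots> = (\<Sum>t\<in>?T. ?Y t ^2) - 2 * \<mu> * (\<Sum>t\<in>?T. ?Y t) + \<mu>^2 * ?cT"
      by (simp add: sum_distrib_left mult.commute)
    finally show ?thesis .
  qed
  also have "(\<Sum>t\<in>?T. ?Y t) = ?C1 / ?k"
  proof -
    have "(\<Sum>t\<in>?T. ?Y t) = (\<Sum>t\<in>?T. real (cyc P (code t @ [False]))) / ?k"
      by (simp add: sum_divide_distrib)
    also have "\<dots> = ?C1 / ?k" using F2[of P n] L a by simp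
    finally show ?thesis .
  qed
  also have "(\<Sum>t\<in>?T. ?Y t ^2) \<le> (?N * ?C2 + 2 * real ?L * ?C1) / ?k^2"
  proof -
    have "(\<Sum>t\<in>?T. ?Y t ^2) = (\<Sum>t\<in>?T. real (cyc P (code t @ [False]))^2) / ?k^2"
      by (simp add: sum_divide_distrib power_divide)
    also have "\<dots> \<le> (?N * ?C2 + 2 * real ?L * ?C1) / ?k^2"
      by (rule divide_right_mono[OF F3[OF L a L0]]) simp
    finally show ?thesis .
  qed
  hence "(\<Sum>t\<in>?T. ?Y t ^2) - 2 * \<mu> * (?C1 / ?k) + \<mu>^2 * ?cT
      \<le> (?N * ?C2 + 2 * real ?L * ?C1) / ?k^2 - 2 * \<mu> * (?C1 / ?k) + \<mu>^2 * ?cT" by simp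
  also have "\<dots> = ((?N / ?k)^2 * (?C2 / ?C) + 2 * real ?L * (?N / ?k) * (1 / ?k) * (?C1 / ?C)
        - 2 * \<mu> * (?N / ?k) * (?C1 / ?C) + \<mu>^2) * ?cT"
    by (rule alg_id[OF F1' Npos kpos Cpos])
  also have "\<dots> = rhoseq ?L ?a \<mu> n * ?cT"
  proof -
    have e1: "?N = 2 * real n + 1" and e2: "?k = real n + 1" by simp_all
    show ?thesis unfolding rhoseq_def Rb_def e1 e2 ..
  qed
  finally show ?thesis .
qed

theorem proposition7:
  fixes F :: pforest
  shows "concentrated trees_of_size (rho F) (1 / 2 ^ (2 * forest_verts F + 1))"
  unfolding concentrated_def
proof (intro allI impI)
  fix \<epsilon> :: real assume eps: "0 < \<epsilon>"
  define m where "m = forest_verts F"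
  define \<mu> :: real where "\<mu> = 1 / 2 ^ (2 * m + 1)"
  define P where "P = pat F"
  define L where "L = length P"
  define a where "a = length (filter id P)"
  define \<eta> where "\<eta> = \<epsilon> / 2"
  have eta: "0 < \<eta>" using eps by (simp add: \<eta>_def)
  have L: "L = 2 * m + 2" by (simp add: L_def P_def m_def pat_length)
  have a: "a = m + 2" by (simp add: a_def P_def m_def pat_count)
  have aL: "a \<le> L" using L a by simp
  have pL: "1 / (2::real) ^ L = \<mu> / 2" by (simp add: L \<mu>_def)
  have e2: "(2::real) ^ (2 * L) = (2 ^ L)^2" by (metis power_mult mult.commute)
  have "1 / (2::real) ^ (2 * L) = (1 / 2 ^ L)^2" unfolding e2 by (simp add: power_one_over)
  hence p2L: "1 / (2::real) ^ (2 * L) = (\<mu> / 2)^2" unfolding pL .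
  have lim0: "rhoseq L a \<mu> \<longlonglongrightarrow> 0"
  proof -
    have "rhoseq L a \<mu> \<longlonglongrightarrow> 2^2 * (1 / 2 ^ (2 * L)) + 2 * real L * 2 * 0 * (1 / 2 ^ L)
       - 2 * \<mu> * 2 * (1 / 2 ^ L) + \<mu>^2" by (rule rhoseq_lim[OF aL])
    also have "2^2 * (1 / 2 ^ (2 * L)) + 2 * real L * 2 * 0 * (1 / 2 ^ L) - 2 * \<mu> * 2 * (1 / 2 ^ L) + \<mu>^2 = (0::real)"
      unfolding pL p2L by (simp add: power2_eq_square)
    finally show ?thesis .
  qed
  have ev1: "eventually (\<lambda>n. rhoseq L a \<mu> n < \<epsilon> * \<eta>^2) sequentially"
    using order_tendstoD(2)[OF lim0, of "\<epsilon> * \<eta>^2"] eps eta by simp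
  have ev2: "eventually (\<lambda>n. 2 * L \<le> 2 * n + 1 \<and> 2 * a \<le> n) sequentially"
    using eventually_ge_at_top[of "2 * L + 2 * a"] by eventually_elim auto
  have ev3: "eventually (\<lambda>n. 1 / (real n + 1) \<le> \<eta>) sequentially"
  proof -
    have "(\<lambda>n. 1 / (real n + 1)) \<longlonglongrightarrow> 0" by real_asymp
    from order_tendstoD(2)[OF this eta] show ?thesis by eventually_elim simp
  qed
  from ev1 ev2 ev3 have "eventually (\<lambda>n. rhoseq L a \<mu> n < \<epsilon> * \<eta>^2 \<and> (2 * L \<le> 2 * n + 1 \<and> 2 * a \<le> n)
     \<and> 1 / (real n + 1) \<le> \<eta>) sequentially" by eventually_elim blast
  then obtain N0 where N0: "\<And>n. n \<ge> N0 \<Longrightarrow> rhoseq L a \<mu> n < \<epsilon> * \<eta>^2 \<and> (2 * L \<le> 2 * n + 1 \<and> 2 * a \<le> n)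
     \<and> 1 / (real n + 1) \<le> \<eta>" unfolding eventually_sequentially by blast
  show "\<exists>K. \<forall>k\<ge>K. uniform_prob (trees_of_size k) (\<lambda>t. \<bar>rho F k t - 1 / 2 ^ (2 * forest_verts F + 1)\<bar> \<le> \<epsilon>) > 1 - \<epsilon>"
  proof (intro exI allI impI)
    fix k assume k: "Suc N0 \<le> k"
    define n where "n = k - 1"
    have kn: "k = n + 1" using k by (simp add: n_def)
    have nN0: "n \<ge> N0" using k by (simp add: n_def)
    note c = N0[OF nN0]
    let ?T = "trees_of_size (n + 1)"
    let ?Y = "\<lambda>t. real (cyc P (code t @ [False])) / real (n + 1)"
    let ?B = "{t\<in>?T. \<not> \<bar>?Y t - \<mu>\<bar> \<le> \<eta>}"
    let ?G = "{t\<in>?T. \<bar>rho F (n + 1) t - \<mu>\<bar> \<le> \<epsilon>}"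
    have fin: "finite ?T" using finite_trees by simp
    have L0: "0 < length P" using L L_def by simp
    have cTpos: "0 < real (card ?T)"
    proof -
      have "real (card ?T) * real (2 * n + 1) = real ((2 * n + 1) choose n)" by (rule F1)
      moreover have "0 < real ((2 * n + 1) choose n)" by simp
      ultimately show ?thesis by (metis of_nat_0_less_iff zero_less_mult_pos2 of_nat_0_le_iff
          order_le_less mult_eq_0_iff less_numeral_extra(3) not_gr0)
    qed
    have bb: "real (card ?B) * \<eta>^2 \<le> rhoseq L a \<mu> n * real (card ?T)"
      using bad_bound[of P n \<eta> \<mu>] c L0 eta by (simp add: L_def a_def)
    also have "\<dots> < \<epsilon> * \<eta>^2 * real (card ?T)" using c cTpos by simp
    finally have "real (card ?B) < \<epsilon> * real (card ?T)" using eta by (simp add: mult.commute mult.left_commute)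
    moreover have sub: "?T - ?B \<subseteq> ?G"
    proof
      fix t assume t: "t \<in> ?T - ?B"
      hence tT: "t \<in> ?T" and Y: "\<bar>?Y t - \<mu>\<bar> \<le> \<eta>" by auto
      have lc: "length (code t) = 2 * n" using length_code[of t] tT by (simp add: trees_of_size_def)
      have "length (pat F) \<le> length (code t) + 1" using c lc L L_def P_def by simp
      then obtain \<delta> where d: "\<delta> \<le> 1" "count_prefix F t = \<delta> + cyc (pat F) (code t @ [False])"
        using count_cyc by blast
      have "rho F (n + 1) t = real \<delta> / real (n + 1) + ?Y t"
        unfolding rho_def d(2) P_def by (simp add: add_divide_distrib)
      moreover have "real \<delta> / real (n + 1) \<le> 1 / (real n + 1)"
      proof -
        have "real \<delta> \<le> 1" using d(1) by simp
        hence "real \<delta> / (real n + 1) \<le> 1 / (real n + 1)" by (rule divide_right_mono) simp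
        thus ?thesis by (simp add: add.commute)
      qed
      moreover have "0 \<le> real \<delta> / real (n + 1)" by simp
      ultimately have "\<bar>rho F (n + 1) t - \<mu>\<bar> \<le> 1 / (real n + 1) + \<eta>" using Y by linarith
      also have "\<dots> \<le> \<epsilon>" using c by (simp add: \<eta>_def)
      finally show "t \<in> ?G" using tT by simp
    qed
    have "card (?T - ?B) \<le> card ?G" by (rule card_mono) (use fin sub in auto)
    moreover have "card (?T - ?B) = card ?T - card ?B" by (rule card_Diff_subset) (use fin in auto)
    moreover have "card ?B \<le> card ?T" by (rule card_mono) (use fin in auto)
    ultimately have "card ?T \<le> card ?G + card ?B" by linarith
    hence "real (card ?T) \<le> real (card ?G + card ?B)" by (simp only: of_nat_le_iff)
    hence r1: "real (card ?T) - real (card ?B) \<le> real (card ?G)" by simp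
    have r2: "(real (card ?T) - real (card ?B)) / real (card ?T) \<le> real (card ?G) / real (card ?T)"
      by (rule divide_right_mono[OF r1]) (use cTpos in simp)
    have r3: "(real (card ?T) - real (card ?B)) / real (card ?T) = 1 - real (card ?B) / real (card ?T)"
      using cTpos by (simp add: diff_divide_distrib)
    have r4: "real (card ?B) / real (card ?T) < \<epsilon>"
      using \<open>real (card ?B) < \<epsilon> * real (card ?T)\<close> cTpos by (simp add: pos_divide_less_eq)
    have "1 - \<epsilon> < real (card ?G) / real (card ?T)" using r2 r3 r4 by linarith
    thus "uniform_prob (trees_of_size k) (\<lambda>t. \<bar>rho F k t - 1 / 2 ^ (2 * forest_verts F + 1)\<bar> \<le> \<epsilon>) > 1 - \<epsilon>"
      unfolding uniform_prob_def kn \<mu>_def m_def by simp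
  qed
qed


end
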